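(* Consider any iteration of the while loop of algorithm Greedy-R, and let $(u,v)$ be the pair chosen in it. Then, with $S$ denoting the current set before $u\otimes v$ is inserted, for every $w\in\widetilde{S}$ we have $$\mathit{ov}(w,u\otimes v)=\mathit{ov}(w,u)\quad\text{and}\quad \mathit{ov}(u\otimes v,w)=\mathit{ov}(v,w).$$
   Context: For strings $x,y$, $\mathit{ov}(x,y)$ is the length of the longest suffix of $x$ that is also a prefix of $y$; $\mathrm{pref}(x,y)$ is $x$ with its suffix of length $\mathit{ov}(x,y)$ removed, and $x\otimes y=\mathrm{pref}(x,y)\,y$. $x^R$ denotes the reversal of $x$. For a set $X$ of strings, $\widetilde{X}=X\cup\{x^R:x\in X\}$. A set $X$ is reverse-factor-free if there are no distinct $x,y\in X$ such that $x$ is a factor of $y$ or of $y^R$. The procedure Make-Reverse-Factor-Free$(X)$ repeatedly removes from the current set a string $x$ for which some other string $y\neq x$ of the current set has $x$ as a factor of $y$ or of $y^R$, until no such string remains. Algorithm Greedy-R$(S)$ on a non-empty finite set of strings: first set $S:=$ Make-Reverse-Factor-Free$(S)$. Then, while $|S|>1$: among all pairs $(u,v)$ with $u,v\in\widetilde{S}$ and $u\notin\{v,v^R\}$, choose one with maximal $\mathit{ov}(u,v)$ (ties broken arbitrarily); set $S:=S\cup\{u\otimes v\}$ and then remove from $S$ all of $u,v,u^R,v^R$ that belong to $S$. Return the only element of $S$. *)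

theory Defs
  imports Main "HOL-Library.Sublist"
begin

text \<open>Strings are lists; factor = contiguous sublist (Sublist.sublist).\<close>

definition ov :: "'a list \<Rightarrow> 'a list \<Rightarrow> nat" where
  "ov x y = Max {k. k \<le> length x \<and> k \<le> length y \<and> drop (length x - k) x = take k y}"

definition pref :: "'a list \<Rightarrow> 'a list \<Rightarrow> 'a list" where
  "pref x y = take (length x - ov x y) x"

definition otimes :: "'a list \<Rightarrow> 'a list \<Rightarrow> 'a list" where
  "otimes x y = pref x y @ y"

definition revclose :: "'a list set \<Rightarrow> 'a list set" where
  "revclose X = X \<union> rev ` X"

definition rff :: "'a list set \<Rightarrow> bool" where
  "rff X \<longleftrightarrow> \<not> (\<exists>x\<in>X. \<exists>y\<in>X. x \<noteq> y \<and> (sublist x y \<or> sublist x (rev y)))"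

definition mrff_step :: "'a list set \<Rightarrow> 'a list set \<Rightarrow> bool" where
  "mrff_step X X' \<longleftrightarrow> (\<exists>x\<in>X. \<exists>y\<in>X. y \<noteq> x \<and> (sublist x y \<or> sublist x (rev y)) \<and> X' = X - {x})"

text \<open>Possible outputs of Make-Reverse-Factor-Free (nondeterministic choices).\<close>
definition mrff_result :: "'a list set \<Rightarrow> 'a list set \<Rightarrow> bool" where
  "mrff_result X Y \<longleftrightarrow> mrff_step\<^sup>*\<^sup>* X Y \<and> \<not> (\<exists>Z. mrff_step Y Z)"

definition greedy_choice :: "'a list set \<Rightarrow> 'a list \<Rightarrow> 'a list \<Rightarrow> bool" where
  "greedy_choice S u v \<longleftrightarrow> u \<in> revclose S \<and> v \<in> revclose S \<and> u \<notin> {v, rev v} \<and>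
     (\<forall>u'\<in>revclose S. \<forall>v'\<in>revclose S. u' \<notin> {v', rev v'} \<longrightarrow> ov u' v' \<le> ov u v)"

definition greedy_step :: "'a list set \<Rightarrow> 'a list set \<Rightarrow> bool" where
  "greedy_step S S' \<longleftrightarrow> card S > 1 \<and> (\<exists>u v. greedy_choice S u v \<and>
     S' = (S \<union> {otimes u v}) - {u, v, rev u, rev v})"

text \<open>S is a current set at the start of some iteration of Greedy-R run on input S0.\<close>
definition greedy_reachable :: "'a list set \<Rightarrow> 'a list set \<Rightarrow> bool" where
  "greedy_reachable S0 S \<longleftrightarrow> finite S0 \<and> S0 \<noteq> {} \<and>
     (\<exists>S1. mrff_result S0 S1 \<and> greedy_step\<^sup>*\<^sup>* S1 S)"

end

theory Submission
  imports Defs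
begin

lemma ov_fin: "finite {k. k \<le> length x \<and> k \<le> length y \<and> drop (length x - k) x = take k y}"
  by (rule finite_subset[of _ "{..length x}"]) auto

lemma ov_mem: "ov x y \<le> length x \<and> ov x y \<le> length y \<and> drop (length x - ov x y) x = take (ov x y) y"
proof -
  have "ov x y \<in> {k. k \<le> length x \<and> k \<le> length y \<and> drop (length x - k) x = take k y}"
    unfolding ov_def by (rule Max_in[OF ov_fin]) auto
  thus ?thesis by simp
qed

lemma ov_ge: "k \<le> length x \<Longrightarrow> k \<le> length y \<Longrightarrow> drop (length x - k) x = take k y \<Longrightarrow> k \<le> ov x y"
  unfolding ov_def by (rule Max_ge[OF ov_fin]) auto

lemma ov_rev: "ov x y = ov (rev y) (rev x)"
proof -
  have "{k. k \<le> length x \<and> k \<le> length y \<and> drop (length x - k) x = take k y}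
      = {k. k \<le> length (rev y) \<and> k \<le> length (rev x) \<and> drop (length (rev y) - k) (rev y) = take k (rev x)}"
  proof (intro Collect_cong iffI conjI)
    fix k assume h: "k \<le> length x \<and> k \<le> length y \<and> drop (length x - k) x = take k y"
    have 1: "rev (drop (length x - k) x) = take k (rev x)" using h[THEN conjunct1] by (simp add: rev_drop)
    have 2: "rev (take k y) = drop (length y - k) (rev y)" using h[THEN conjunct2, THEN conjunct1] by (simp add: rev_take)
    show "drop (length (rev y) - k) (rev y) = take k (rev x)" using h 1 2 by (metis length_rev)
  next
    fix k assume h: "k \<le> length (rev y) \<and> k \<le> length (rev x) \<and> drop (length (rev y) - k) (rev y) = take k (rev x)"
    have 1: "rev (drop (length x - k) x) = take k (rev x)" using h[THEN conjunct2, THEN conjunct1] by (simp add: rev_drop)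
    have 2: "rev (take k y) = drop (length y - k) (rev y)" using h[THEN conjunct1] by (simp add: rev_take)
    show "drop (length x - k) x = take k y" using h 1 2 by (metis length_rev rev_rev_ident)
  qed auto
  thus ?thesis unfolding ov_def by simp
qed

lemma ov_prefix:
  assumes "prefix u t"
  shows "ov w t = ov w u \<or> (sublist u w \<and> length u < length w)"
proof (cases "ov w t \<le> length u")
  case True
  obtain r where t: "t = u @ r" using assms prefix_def by blast
  have m: "drop (length w - ov w t) w = take (ov w t) t" using ov_mem by blast
  have "take (ov w t) t = take (ov w t) u" using True t by simp
  hence a: "ov w t \<le> ov w u" using m True ov_mem[of w t] by (intro ov_ge) auto
  have m2: "drop (length w - ov w u) w = take (ov w u) u" using ov_mem by blast
  have "take (ov w u) t = take (ov w u) u" using ov_mem[of w u] t by simp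
  hence "ov w u \<le> ov w t" using m2 ov_mem[of w u] t by (intro ov_ge) auto
  thus ?thesis using a by simp
next
  case False
  obtain r where t: "t = u @ r" using assms prefix_def by blast
  have m: "drop (length w - ov w t) w = take (ov w t) t" using ov_mem by blast
  have "take (ov w t) t = u @ take (ov w t - length u) r" using False t by simp
  hence "sublist u (drop (length w - ov w t) w)" using m by simp
  hence "sublist u w" using sublist_drop sublist_order.order_trans by blast
  moreover have "length u < length w" using False ov_mem[of w t] by simp
  ultimately show ?thesis by simp
qed

lemma ov_suffix:
  assumes "suffix v t"
  shows "ov t w = ov v w \<or> (sublist v w \<and> length v < length w)"
proof -
  have "prefix (rev v) (rev t)" using assms by (simp add: suffix_to_prefix)
  from ov_prefix[OF this, of "rev w"] show ?thesis
    by (metis length_rev ov_rev sublist_rev)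
qed

definition inv :: "'a list set \<Rightarrow> bool" where
  "inv S \<longleftrightarrow> (\<forall>a\<in>revclose S. \<forall>b\<in>revclose S. b \<notin> {a, rev a} \<longrightarrow> \<not> sublist a b)"

lemma otimes_eq: "otimes u v = take (length u - ov u v) u @ v"
  unfolding otimes_def pref_def by simp

lemma otimes_prefix: "prefix u (otimes u v)"
proof -
  have m: "drop (length u - ov u v) u = take (ov u v) v" using ov_mem by blast
  have "u = take (length u - ov u v) u @ take (ov u v) v"
    by (metis append_take_drop_id m)
  moreover have "prefix (take (length u - ov u v) u @ take (ov u v) v) (take (length u - ov u v) u @ v)"
    by (simp add: take_is_prefix)
  ultimately show ?thesis by (metis otimes_eq)
qed

lemma otimes_suffix: "suffix v (otimes u v)"
  unfolding otimes_eq suffix_def by blast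

lemma junction:
  assumes gc: "greedy_choice S u v" and I: "inv S" and a: "a \<in> revclose S"
    and an: "a \<notin> {u, v, rev u, rev v}" and sa: "sublist a (otimes u v)"
  shows False
proof -
  have u: "u \<in> revclose S" and v: "v \<in> revclose S" using gc unfolding greedy_choice_def by auto
  have nu: "\<not> sublist a u" proof -
    have "u \<noteq> rev a" using an by auto
    thus ?thesis using I a u an unfolding inv_def by auto
  qed
  have nv: "\<not> sublist a v" proof -
    have "v \<noteq> rev a" using an by auto
    thus ?thesis using I a v an unfolding inv_def by auto
  qed
  define p where "p = take (length u - ov u v) u"
  have lp: "length p = length u - ov u v" using ov_mem[of u v] unfolding p_def by simp
  have t: "otimes u v = p @ v" by (simp add: otimes_eq p_def)
  obtain r where ur: "otimes u v = u @ r" using otimes_prefix prefixE by metis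
  obtain ps ss where d: "p @ v = ps @ a @ ss" using sa t unfolding sublist_def by auto
  have c1: "length ps < length p"
  proof (rule ccontr)
    assume "\<not> length ps < length p"
    hence "v = drop (length p) ps @ a @ ss"
      using d by (simp add: append_eq_append_conv_if)
    thus False using nv by (metis sublist_appendI)
  qed
  have c2: "length u < length ps + length a"
  proof (rule ccontr)
    assume h: "\<not> length u < length ps + length a"
    have "u @ r = ps @ a @ ss" using d t ur by simp
    hence "take (length u) (u @ r) = take (length u) (ps @ a @ ss)" by simp
    hence "u = ps @ a @ take (length u - length ps - length a) ss" using h by simp
    thus False using nu by (metis sublist_appendI)
  qed
  define m where "m = length u - length ps"
  have "u @ r = ps @ a @ ss" using d t ur by simp
  hence e: "drop (length ps) (u @ r) = a @ ss" by simp
  have lu: "length ps \<le> length u" using c1 lp by simp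
  have "drop (length u - m) u = take m a"
  proof -
    have "take m (drop (length ps) (u @ r)) = drop (length ps) u"
      using lu by (simp add: m_def)
    moreover have "take m (a @ ss) = take m a" using c2 m_def by simp
    moreover have "length u - m = length ps" using lu m_def by simp
    ultimately show ?thesis using e by metis
  qed
  hence "m \<le> ov u a" using c2 lu m_def by (intro ov_ge) auto
  moreover have "ov u a \<le> ov u v"
  proof -
    have "u \<noteq> rev a" using an by auto
    thus ?thesis using gc a an unfolding greedy_choice_def by auto
  qed
  moreover have "ov u v < m" using c1 lp m_def ov_mem[of u v] by simp
  ultimately show False by simp
qed

lemma revclose_rev: "c \<in> revclose S \<Longrightarrow> rev c \<in> revclose S"
  unfolding revclose_def by auto

lemma inv_init: assumes "mrff_result S0 S1" shows "inv S1"
  unfolding inv_def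
proof (intro ballI impI notI)
  fix a b assume a: "a \<in> revclose S1" and b: "b \<in> revclose S1" and nb: "b \<notin> {a, rev a}" and s: "sublist a b"
  have ns: "\<not> (\<exists>Z. mrff_step S1 Z)" using assms unfolding mrff_result_def by blast
  have bad: "\<And>x y. x \<in> S1 \<Longrightarrow> y \<in> S1 \<Longrightarrow> y \<noteq> x \<Longrightarrow> sublist x y \<or> sublist x (rev y) \<Longrightarrow> False"
    using ns unfolding mrff_step_def by blast
  obtain x where x: "x \<in> S1" "a = x \<or> a = rev x" using a unfolding revclose_def by auto
  obtain y where y: "y \<in> S1" "b = y \<or> b = rev y" using b unfolding revclose_def by auto
  show False
  proof (cases "a = x")
    case True
    show ?thesis
    proof (cases "b = y")
      case True
      thus ?thesis using bad[OF x(1) y(1)] \<open>a = x\<close> nb s by auto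
    next
      case False
      hence "b = rev y" using y by auto
      thus ?thesis using bad[OF x(1) y(1)] \<open>a = x\<close> nb s by auto
    qed
  next
    case False
    hence ax: "a = rev x" using x by auto
    show ?thesis
    proof (cases "b = y")
      case True
      thus ?thesis using bad[OF x(1) y(1)] ax nb s by (auto simp: sublist_rev_left)
    next
      case False
      hence "b = rev y" using y by auto
      thus ?thesis using bad[OF x(1) y(1)] ax nb s by auto
    qed
  qed
qed

lemma inv_step:
  assumes I: "inv S" and st: "greedy_step S S'"
  shows "inv S'"
proof -
  obtain u v where gc: "greedy_choice S u v" and S': "S' = (S \<union> {otimes u v}) - {u, v, rev u, rev v}"
    using st unfolding greedy_step_def by blast
  define t where "t = otimes u v"
  define R where "R = {u, v, rev u, rev v}"
  have mem: "c = t \<or> c = rev t \<or> (c \<in> revclose S \<and> c \<notin> R)" if "c \<in> revclose S'" for c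
    using that unfolding S' revclose_def t_def R_def by auto
  have A: "\<not> sublist c t" if "c \<in> revclose S" "c \<notin> R" for c
    using junction[OF gc I that(1)] that(2) unfolding R_def t_def by blast
  have Rr: "rev c \<notin> R" if "c \<notin> R" for c using that unfolding R_def by auto
  have A2: "\<not> sublist c (rev t)" if "c \<in> revclose S" "c \<notin> R" for c
    using A[OF revclose_rev[OF that(1)] Rr[OF that(2)]] by (simp add: sublist_rev_right)
  have u: "u \<in> revclose S" using gc unfolding greedy_choice_def by auto
  have B: "\<not> sublist t c" if "c \<in> revclose S" "c \<notin> R" for c
  proof
    assume "sublist t c"
    moreover have "sublist u t" using otimes_prefix unfolding t_def by blast
    ultimately have "sublist u c" using sublist_order.order_trans by blast
    moreover have "c \<noteq> u" "c \<noteq> rev u" using that(2) unfolding R_def by auto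
    ultimately show False using I u that(1) unfolding inv_def by auto
  qed
  have B2: "\<not> sublist (rev t) c" if "c \<in> revclose S" "c \<notin> R" for c
    using B[OF revclose_rev[OF that(1)] Rr[OF that(2)]] by (simp add: sublist_rev_left)
  show ?thesis
    unfolding inv_def
  proof (intro ballI impI notI)
    fix a b assume a: "a \<in> revclose S'" and b: "b \<in> revclose S'" and nb: "b \<notin> {a, rev a}" and s: "sublist a b"
    from mem[OF a] mem[OF b] show False
    proof (elim disjE conjE)
      fix x assume "a \<in> revclose S" "a \<notin> R" "b \<in> revclose S" "b \<notin> R"
      thus False using I nb s unfolding inv_def by blast
    qed (use nb s A A2 B B2 in auto)
  qed
qed

lemma reach_inv: assumes "greedy_reachable S0 S" shows "inv S"
proof -
  obtain S1 where m: "mrff_result S0 S1" and r: "greedy_step\<^sup>*\<^sup>* S1 S"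
    using assms unfolding greedy_reachable_def by blast
  from r inv_init[OF m] show ?thesis
    by (induction rule: rtranclp_induct) (auto intro: inv_step)
qed

theorem lemma2:
  fixes S0 S :: "'a list set" and u v w :: "'a list"
  assumes "greedy_reachable S0 S"
    and "card S > 1"
    and "greedy_choice S u v"
    and "w \<in> revclose S"
  shows "ov w (otimes u v) = ov w u \<and> ov (otimes u v) w = ov v w"
proof -
  have I: "inv S" using reach_inv[OF assms(1)] .
  have u: "u \<in> revclose S" and v: "v \<in> revclose S" using assms(3) unfolding greedy_choice_def by auto
  have 1: "ov w (otimes u v) = ov w u"
  proof -
    from ov_prefix[OF otimes_prefix[of u v], of w] show ?thesis
    proof
      assume h: "sublist u w \<and> length u < length w"
      hence "w \<noteq> u" "w \<noteq> rev u" by auto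
      thus ?thesis using h I u assms(4) unfolding inv_def by auto
    qed
  qed
  have 2: "ov (otimes u v) w = ov v w"
  proof -
    from ov_suffix[OF otimes_suffix[of v u], of w] show ?thesis
    proof
      assume h: "sublist v w \<and> length v < length w"
      hence "w \<noteq> v" "w \<noteq> rev v" by auto
      thus ?thesis using h I v assms(4) unfolding inv_def by auto
    qed
  qed
  from 1 2 show ?thesis ..
qed

end
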